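(* Fix $\eta\ge 2$, $\kappa>0$, transmit power $P'>0$ and $N>0$. For each $T\ge 3$ consider the $T$-node Gaussian multiple relay channel in which the nodes $1,\dots,T$ lie on a line with consecutive spacing $1$ (so $d_{it}=|i-t|$), every transmitting node has power constraint $E[X_i^2]\le P'$, and the noise variances satisfy $N_t\le N$. Then there is a constant $c>0$ depending only on $\eta,\kappa,P',N$ (not on $T$) such that, for every $T$, the two-hop myopic achievable rate of Theorem 1 (with jointly Gaussian inputs, $X_t$ a linear combination of independent Gaussian $U_t,U_{t+1}$ with a power split) is at least $c$; in particular two-hop myopic coding rates stay bounded away from zero as $T\to\infty$.
   Context: The Gaussian multiple relay channel is $Y_t=\sum_{i=1,\,i\ne t}^{T-1}\sqrt{\kappa d_{it}^{-\eta}}\,X_i+Z_t$ for $t=2,\dots,T$, where $Z_t\sim\mathcal N(0,N_t)$ are independent of the inputs and of each other, $d_{it}$ is the distance between nodes $i$ and $t$, and $\eta$ is the path loss exponent. The two-hop achievable rate is $\min_{t\in\{2,\dots,T\}} I(U_{t-2},U_{t-1};Y_t\mid U_t,U_{t+1})$ with $U_0=U_T=U_{T+1}=0$, where $U_1,\dots,U_{T-1}$ are independent, $X_t$ is a function of $(U_t,U_{t+1})$ for $t\le T-2$ and $X_{T-1}$ a function of $U_{T-1}$; signals of nodes not in $\{U_{t-2},\dots,U_{t+1}\}$ are treated as noise at node $t$. *)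

theory Defs
  imports Complex_Main
begin

definition gain :: "real \<Rightarrow> real \<Rightarrow> nat \<Rightarrow> nat \<Rightarrow> real" where
  "gain \<kappa> \<eta> i t = sqrt (\<kappa> * (\<bar>real i - real t\<bar> powr (- \<eta>)))"

text \<open>Gaussian two-hop scheme: U_1..U_(T-1) independent standard Gaussians,
  X_i = a i * U_i + b i * U_(i+1) for i <= T-2, X_(T-1) = a (T-1) * U_(T-1).
  Coefficient of U_j in Y_t (transmitters are nodes 1..T-1, node t does not
  hear itself):\<close>
definition ucoef :: "real \<Rightarrow> real \<Rightarrow> nat \<Rightarrow> (nat \<Rightarrow> real) \<Rightarrow> (nat \<Rightarrow> real)
    \<Rightarrow> nat \<Rightarrow> nat \<Rightarrow> real" where
  "ucoef \<kappa> \<eta> T a b j t =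
     (if 1 \<le> j \<and> j \<le> T - 1 \<and> j \<noteq> t then gain \<kappa> \<eta> j t * a j else 0)
   + (if 2 \<le> j \<and> j - 1 \<le> T - 2 \<and> j - 1 \<noteq> t then gain \<kappa> \<eta> (j - 1) t * b (j - 1) else 0)"

definition power_ok :: "real \<Rightarrow> nat \<Rightarrow> (nat \<Rightarrow> real) \<Rightarrow> (nat \<Rightarrow> real) \<Rightarrow> bool" where
  "power_ok P' T a b \<longleftrightarrow>
     (\<forall>i\<in>{1..T-2}. (a i)\<^sup>2 + (b i)\<^sup>2 \<le> P') \<and> (a (T - 1))\<^sup>2 \<le> P'"

text \<open>I(U_(t-2), U_(t-1); Y_t | U_t, U_(t+1)) (in bits) for the jointly Gaussian
  scheme, with U_0 = U_T = U_(T+1) = 0 (i.e. only indices 1..T-1 exist):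
  h(Y_t | U_t,U_(t+1)) - h(Y_t | U_(t-2),...,U_(t+1)).\<close>
definition hop_info :: "real \<Rightarrow> real \<Rightarrow> nat \<Rightarrow> (nat \<Rightarrow> real) \<Rightarrow> (nat \<Rightarrow> real)
    \<Rightarrow> (nat \<Rightarrow> real) \<Rightarrow> nat \<Rightarrow> real" where
  "hop_info \<kappa> \<eta> T a b Nv t =
     1/2 * log 2
       ((Nv t + (\<Sum>j\<in>{1..T-1} - {t, t+1}. (ucoef \<kappa> \<eta> T a b j t)\<^sup>2)) /
        (Nv t + (\<Sum>j\<in>{1..T-1} - {t-2, t-1, t, t+1}. (ucoef \<kappa> \<eta> T a b j t)\<^sup>2)))"

definition two_hop_rate :: "real \<Rightarrow> real \<Rightarrow> nat \<Rightarrow> (nat \<Rightarrow> real) \<Rightarrow> (nat \<Rightarrow> real)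
    \<Rightarrow> (nat \<Rightarrow> real) \<Rightarrow> real" where
  "two_hop_rate \<kappa> \<eta> T a b Nv = Min ((hop_info \<kappa> \<eta> T a b Nv) ` {2..T})"

end

theory Submission imports Defs begin

lemma key: fixes d \<eta> :: real assumes "d \<ge> 2" "\<eta> \<ge> 2"
  shows "d powr (-\<eta>) \<le> 1/(d-1) - 1/d"
proof -
  have "d powr (-\<eta>) \<le> d powr (-2)" using assms by (intro powr_mono) auto
  also have "\<dots> = 1/d^2" using assms by (simp add: powr_minus powr_realpow divide_inverse)
  also have "\<dots> \<le> 1/(d-1) - 1/d" using assms by (simp add: field_simps power2_eq_square)
  finally show ?thesis .
qed

lemma left: fixes t :: nat assumes "t \<ge> 2" "\<eta> \<ge> 2"
  shows "(\<Sum>j=0..t-2. \<bar>real j - real t\<bar> powr (-\<eta>)) \<le> 1"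
proof -
  let ?g = "\<lambda>j::nat. 1/(real t - real j)"
  have "(\<Sum>j=0..t-2. \<bar>real j - real t\<bar> powr (-\<eta>)) \<le> (\<Sum>j=0..t-2. ?g (Suc j) - ?g j)"
  proof (rule sum_mono)
    fix j assume "j \<in> {0..t-2}"
    hence j: "real j + 2 \<le> real t" using assms by auto
    have "\<bar>real j - real t\<bar> = real t - real j" using j by auto
    moreover have "(real t - real j) powr (-\<eta>) \<le> 1/((real t - real j)-1) - 1/(real t - real j)"
      using key[of "real t - real j" \<eta>] j assms by auto
    ultimately show "\<bar>real j - real t\<bar> powr (-\<eta>) \<le> ?g (Suc j) - ?g j" by (simp add: algebra_simps)
  qed
  also have "\<dots> = ?g (Suc (t-2)) - ?g 0" by (rule sum_Suc_diff) simp
  also have "\<dots> \<le> 1" using assms by (simp add: of_nat_diff)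
  finally show ?thesis .
qed

lemma right: fixes t M :: nat assumes "\<eta> \<ge> 2"
  shows "(\<Sum>j=t+2..M. \<bar>real j - real t\<bar> powr (-\<eta>)) \<le> 1"
proof (cases "t + 2 \<le> M")
  case False thus ?thesis by simp
next
  case True
  let ?k = "\<lambda>j::nat. 1/(real j - real t - 1)"
  have "(\<Sum>j=t+2..M. \<bar>real j - real t\<bar> powr (-\<eta>)) \<le> (\<Sum>j=t+2..M. -(?k (Suc j) - ?k j))"
  proof (rule sum_mono)
    fix j assume "j \<in> {t+2..M}"
    hence j: "real t + 2 \<le> real j" by auto
    have "\<bar>real j - real t\<bar> = real j - real t" using j by auto
    moreover have "(real j - real t) powr (-\<eta>) \<le> 1/((real j - real t)-1) - 1/(real j - real t)"
      using key[of "real j - real t" \<eta>] j assms by auto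
    ultimately show "\<bar>real j - real t\<bar> powr (-\<eta>) \<le> -(?k (Suc j) - ?k j)" by (simp add: algebra_simps)
  qed
  also have "\<dots> = - (\<Sum>j=t+2..M. (?k (Suc j) - ?k j))" by (simp add: sum_negf[symmetric] algebra_simps)
  also have "(\<Sum>j=t+2..M. (?k (Suc j) - ?k j)) = ?k (Suc M) - ?k (t+2)" by (rule sum_Suc_diff) (use True in simp)
  also have "- (?k (Suc M) - ?k (t+2)) \<le> 1" using True by simp
  finally show ?thesis .
qed

lemma both: fixes t M :: nat assumes "\<eta> \<ge> 2" "finite S" "\<forall>j\<in>S. j + 2 \<le> t \<or> (t + 2 \<le> j \<and> j \<le> M)"
  shows "(\<Sum>j\<in>S. \<bar>real j - real t\<bar> powr (-\<eta>)) \<le> 2"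
proof -
  let ?f = "\<lambda>j::nat. \<bar>real j - real t\<bar> powr (-\<eta>)"
  have "sum ?f S \<le> sum ?f ({0..t-2} \<union> {t+2..M})"
    by (rule sum_mono2) (use assms in auto)
  also have "\<dots> \<le> sum ?f {0..t-2} + sum ?f {t+2..M}"
    using sum.union_inter[of "{0..t-2}" "{t+2..M}" ?f] by (smt (verit) finite_Int finite_atLeastAtMost powr_ge_zero sum_nonneg)
  also have "\<dots> \<le> 2"
  proof (cases "t \<ge> 2")
    case True thus ?thesis using left[OF True assms(1)] right[OF assms(1), of t M] by linarith
  next
    case False
    hence "{0..t-2} = {0}" by auto
    moreover have "?f 0 \<le> 1"
    proof (cases "t = 0")
      case True thus ?thesis by simp
    next
      case False with \<open>\<not> t \<ge> 2\<close> have "t = 1" by auto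
      thus ?thesis by simp
    qed
    ultimately show ?thesis using right[OF assms(1), of t M] by simp
  qed
  finally show ?thesis .
qed
lemma ucoef_sq:
  assumes "\<kappa> > 0"
  shows "(ucoef \<kappa> \<eta> T (\<lambda>_. s) (\<lambda>_. 0) j t)\<^sup>2 =
    (if 1 \<le> j \<and> j \<le> T - 1 \<and> j \<noteq> t then \<kappa> * \<bar>real j - real t\<bar> powr (-\<eta>) * s\<^sup>2 else 0)"
  using assms by (simp add: ucoef_def gain_def power_mult_distrib)

theorem mainTheorem3:
  fixes \<eta> \<kappa> P' N :: real
  assumes "\<eta> \<ge> 2" and "\<kappa> > 0" and "P' > 0" and "N > 0"
  shows "\<exists>c>0. \<forall>T::nat. T \<ge> 3 \<longrightarrow>
           (\<forall>Nv::nat \<Rightarrow> real. (\<forall>t\<in>{2..T}. 0 < Nv t \<and> Nv t \<le> N) \<longrightarrow>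
              (\<exists>a b. power_ok P' T a b \<and> two_hop_rate \<kappa> \<eta> T a b Nv \<ge> c))"
proof -
  define K where "K = \<kappa> * P'"
  have K: "K > 0" using assms by (simp add: K_def)
  define c where "c = 1/2 * log 2 (1 + K / (N + 2*K))"
  have cpos: "c > 0" unfolding c_def using K assms by (simp add: add_pos_pos)
  show ?thesis
  proof (intro exI[of _ c] conjI cpos allI impI)
    fix T :: nat and Nv :: "nat \<Rightarrow> real"
    assume T: "T \<ge> 3" and Nv: "\<forall>t\<in>{2..T}. 0 < Nv t \<and> Nv t \<le> N"
    define s where "s = sqrt P'"
    have s2: "s\<^sup>2 = P'" using assms by (simp add: s_def)
    let ?a = "\<lambda>_::nat. s" and ?b = "\<lambda>_::nat. 0::real"
    have pok: "power_ok P' T ?a ?b" unfolding power_ok_def using s2 by simp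
    have hop: "hop_info \<kappa> \<eta> T ?a ?b Nv t \<ge> c" if t: "t \<in> {2..T}" for t
    proof -
      let ?q = "\<lambda>j. (ucoef \<kappa> \<eta> T ?a ?b j t)\<^sup>2"
      let ?f = "\<lambda>j::nat. \<bar>real j - real t\<bar> powr (-\<eta>)"
      define S1 where "S1 = {1..T-1} - {t, t+1}"
      define S2 where "S2 = {1..T-1} - {t-2, t-1, t, t+1}"
      have qS2: "?q j = K * ?f j" if "j \<in> S2" for j
        using that ucoef_sq[OF assms(2)] s2 unfolding S2_def K_def by auto
      have "sum ?q S2 = K * sum ?f S2" using qS2 by (simp add: sum_distrib_left)
      also have "sum ?f S2 \<le> 2"
        by (rule both[OF assms(1), of S2 t T]) (use t in \<open>auto simp: S2_def\<close>)
      hence "K * sum ?f S2 \<le> K * 2" using K by simp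
      finally have B2: "sum ?q S2 \<le> 2 * K" by simp
      have q1: "?q (t-1) = K" using t ucoef_sq[OF assms(2)] s2 unfolding K_def
        by (auto simp: of_nat_diff)
      have "sum ?q (insert (t-1) S2) \<le> sum ?q S1"
        by (rule sum_mono2) (use t in \<open>auto simp: S1_def S2_def\<close>)
      moreover have "t - 1 \<notin> S2" by (simp add: S2_def)
      ultimately have B1: "sum ?q S1 \<ge> sum ?q S2 + K" using q1 by (simp add: S2_def)
      define D where "D = Nv t + sum ?q S2"
      have Dpos: "D > 0" using Nv t unfolding D_def by (smt (verit) sum_nonneg zero_le_power2)
      have Dle: "D \<le> N + 2*K" using Nv t B2 unfolding D_def by force
      have "1 + K / (N + 2*K) \<le> 1 + K / D"
        using K Dpos Dle by (intro add_left_mono divide_left_mono) auto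
      also have "\<dots> = (D + K) / D" using Dpos by (simp add: field_simps)
      also have "\<dots> \<le> (Nv t + sum ?q S1) / D"
        using Dpos B1 unfolding D_def by (intro divide_right_mono) auto
      finally have R: "1 + K / (N + 2*K) \<le> (Nv t + sum ?q S1) / D" .
      have pos: "0 < 1 + K / (N + 2*K)" using K assms by (smt (verit) divide_nonneg_pos)
      have "log 2 (1 + K / (N + 2*K)) \<le> log 2 ((Nv t + sum ?q S1) / D)"
        using R pos by simp
      thus ?thesis unfolding c_def hop_info_def D_def S1_def S2_def by simp
    qed
    have "two_hop_rate \<kappa> \<eta> T ?a ?b Nv \<ge> c"
      unfolding two_hop_rate_def using hop T by (subst Min_ge_iff) auto
    with pok show "\<exists>a b. power_ok P' T a b \<and> two_hop_rate \<kappa> \<eta> T a b Nv \<ge> c" by blast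
  qed
qed

end
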